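(* Let $p_0(x)=1/\sqrt\pi$, $p_n(\cos\theta)=\sqrt{2/\pi}\cos(n\theta)$ ($n\ge1$) be the orthonormal Chebyshev polynomials of the first kind. For $n\in\mathbb{N}$ and $x\in(-1,1)$ let $\lambda_n(x)=\big(\sum_{i=0}^{n-1}p_i^2(x)\big)^{-1}$, $\Psi_{n,j}(x)=\lambda_n(x)p_{j-1}^2(x)$ ($j=1,\dots,n$), $\mathcal S(\bm\Psi_n(x))=-\sum_{j=1}^n\Psi_{n,j}(x)\log\Psi_{n,j}(x)$, and $\mathcal D_\infty(x)=\lim_{n\to\infty}\big(\log n-\mathcal S(\bm\Psi_n(x))\big)$. Let $x=\cos\theta$ with $\theta/\pi=s/k$, where $s,k\in\mathbb{N}$, $s<k$, $\operatorname{GCD}(s,k)=1$. Then $$\mathcal D_\infty(x)=\begin{cases}1-\log2+\mathcal R\!\left(\frac1k\right)>1-\log2, & k \text{ even},\\[2mm] 1-\log2+2\Big[\mathcal R\!\left(\frac1{2k}\right)-\frac12\mathcal R\!\left(\frac1k\right)\Big]<1-\log2, & k\text{ odd},\end{cases}$$ where $\mathcal R(y)=-y\big(\psi(1-y)+2\gamma+\psi(1+y)\big)$ for $|y|<1$.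
   Context: $\psi=\Gamma'/\Gamma$ is the digamma function and $\gamma$ is the Euler–Mascheroni constant; equivalently $\mathcal R(y)=2\sum_{m\ge1}\zeta(2m+1)y^{2m+1}$ for $|y|<1$, with $\zeta$ the Riemann zeta function. $\theta\in(0,\pi)$. $\operatorname{GCD}$ is the greatest common divisor. *)

theory Defs
  imports "HOL-Analysis.Analysis"
begin

definition cheb_p :: "nat \<Rightarrow> real \<Rightarrow> real" where
  "cheb_p n x = (if n = 0 then 1 / sqrt pi else sqrt (2 / pi) * cos (real n * arccos x))"

definition christoffel :: "nat \<Rightarrow> real \<Rightarrow> real" where
  "christoffel n x = 1 / (\<Sum>i<n. (cheb_p i x)\<^sup>2)"

definition Psi :: "nat \<Rightarrow> nat \<Rightarrow> real \<Rightarrow> real" where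
  "Psi n j x = christoffel n x * (cheb_p (j - 1) x)\<^sup>2"

definition entropy_Psi :: "nat \<Rightarrow> real \<Rightarrow> real" where
  "entropy_Psi n x = - (\<Sum>j=1..n. (if Psi n j x = 0 then 0 else Psi n j x * ln (Psi n j x)))"

definition R_fun :: "real \<Rightarrow> real" where
  "R_fun y = - y * (Digamma (1 - y) + 2 * euler_mascheroni + Digamma (1 + y))"

end

theory Submission
  imports Defs
begin

lemma R_series:
  fixes y :: real assumes y: "0 < y" "y < 1"
  shows "(\<lambda>n. 2*y^3/((real n+1)*((real n+1)^2 - y^2))) sums R_fun y"
proof -
  have s1: "(\<lambda>n. inverse (real (Suc n)) - inverse ((1-y) + real n)) sums (Digamma (1-y) + euler_mascheroni)"
    using summable_Digamma[of "1-y"] y by (simp add: Digamma_def summable_sums)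
  have s2: "(\<lambda>n. inverse (real (Suc n)) - inverse ((1+y) + real n)) sums (Digamma (1+y) + euler_mascheroni)"
    using summable_Digamma[of "1+y"] y by (simp add: Digamma_def summable_sums)
  have "(\<lambda>n. -y * ((inverse (real (Suc n)) - inverse ((1-y) + real n)) + (inverse (real (Suc n)) - inverse ((1+y) + real n))))
     sums (-y * ((Digamma (1-y) + euler_mascheroni) + (Digamma (1+y) + euler_mascheroni)))"
    by (intro sums_mult sums_add s1 s2)
  moreover have "(\<lambda>n. -y * ((inverse (real (Suc n)) - inverse ((1-y) + real n)) + (inverse (real (Suc n)) - inverse ((1+y) + real n))))
      = (\<lambda>n. 2*y^3/((real n+1)*((real n+1)^2 - y^2)))"
  proof
    fix n
    have a: "(1-y) + real n > 0" "(1+y) + real n > 0" "real n + 1 > 0" using y by auto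
    have b: "(real n+1)^2 - y^2 > 0"
    proof -
      have "(real n+1)^2 - y^2 = (real n + 1 - y) * (real n + 1 + y)" by (simp add: power2_eq_square algebra_simps)
      also have "\<dots> > 0" using a y by (intro mult_pos_pos) auto
      finally show ?thesis .
    qed
    show "-y * ((inverse (real (Suc n)) - inverse ((1-y) + real n)) + (inverse (real (Suc n)) - inverse ((1+y) + real n)))
       = 2*y^3/((real n+1)*((real n+1)^2 - y^2))"
    proof -
      define N where "N = real n + 1"
      have e: "real (Suc n) = N" "(1-y) + real n = N - y" "(1+y) + real n = N + y" by (auto simp: N_def)
      have nz: "N \<noteq> 0" "N - y \<noteq> 0" "N + y \<noteq> 0" "N^2 - y^2 \<noteq> 0" using a b by (auto simp: N_def)
      show ?thesis unfolding e N_def[symmetric] using nz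
        by (simp add: divide_simps) (simp add: power2_eq_square power3_eq_cube algebra_simps)
    qed
  qed
  moreover have "-y * ((Digamma (1-y) + euler_mascheroni) + (Digamma (1+y) + euler_mascheroni)) = R_fun y"
    by (simp add: R_fun_def algebra_simps)
  ultimately show ?thesis by simp
qed


definition tt :: "real \<Rightarrow> real" where "tt m = 1/(m-1) - 2/m + 1/(m+1)"

lemma tt_alt: "m > 1 \<Longrightarrow> tt m = 2 / (m * (m^2 - 1))"
proof -
  assume m: "m > 1"
  have "m * m > 1" using m by (simp add: less_1_mult)
  hence nz: "m - 1 \<noteq> 0" "m \<noteq> 0" "m + 1 \<noteq> 0" "m^2 - 1 \<noteq> 0" using m
    by (auto simp: power2_eq_square)
  show ?thesis using nz unfolding tt_def
    by (simp add: divide_simps) (simp add: power2_eq_square algebra_simps)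
qed

lemma tt_zero [simp]: "tt 0 = 0" by (simp add: tt_def)

lemma tt_pos: "m > 1 \<Longrightarrow> tt m > 0"
proof -
  assume m: "m > 1"
  have "m * m > 1" using m by (simp add: less_1_mult)
  hence "m^2 - 1 > 0" by (simp add: power2_eq_square)
  thus ?thesis using m by (simp add: tt_alt)
qed

lemma tt_double: "m > 1 \<Longrightarrow> 2 * tt (2*m) < tt m"
proof -
  assume m: "m > 1"
  have m2: "m^2 > 1" using m by (simp add: less_1_mult power2_eq_square)
  have m4: "4*m^2 > 1" using m2 by linarith
  have "2 * tt (2*m) = 2 / (m * (4*m^2 - 1))" using m by (simp add: tt_alt power2_eq_square)
  also have "\<dots> < 2 / (m * (m^2 - 1))"
  proof (intro divide_strict_left_mono mult_strict_left_mono)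
    show "0 < m * (4 * m\<^sup>2 - 1) * (m * (m\<^sup>2 - 1))" using m m2 m4 by (intro mult_pos_pos) auto
    show "m\<^sup>2 - 1 < 4 * m\<^sup>2 - 1" using m2 by linarith
  qed (use m in auto)
  also have "\<dots> = tt m" using m by (simp add: tt_alt)
  finally show ?thesis .
qed

lemma gt1: "2 \<le> q \<Longrightarrow> 0 < n \<Longrightarrow> 1 < real (q*n)"
proof -
  assume a: "2 \<le> q" "0 < n"
  have "2*1 \<le> q*n" using a by (intro mult_mono) auto
  then show ?thesis by linarith
qed

lemma R_inv:
  fixes q :: nat assumes q: "q \<ge> 2"
  shows "(\<lambda>n. tt (real (q * Suc n))) sums R_fun (1 / real q)"
proof -
  have y: "0 < 1 / real q" "1 / real q < 1" using q by auto
  have "(\<lambda>n. 2*(1/real q)^3/((real n+1)*((real n+1)^2 - (1/real q)^2))) = (\<lambda>n. tt (real (q * Suc n)))"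
  proof
    fix n
    define N where "N = real n + 1"
    have N: "N \<ge> 1" by (simp add: N_def)
    have qN: "real (q * Suc n) = real q * N" by (simp add: N_def algebra_simps)
    have qN1: "real q * N > 1" using gt1[OF q, of "Suc n"] qN by simp
    have qq: "(real q * N) * (real q * N) > 1" using qN1 by (simp add: less_1_mult)
    have qpos: "real q > 0" using q by simp
    have e2: "N^2 - (1/real q)^2 = ((real q * N)^2 - 1) / (real q)^2"
      using qpos by (simp add: field_simps power2_eq_square)
    have nz: "real q \<noteq> 0" "N \<noteq> 0" "(real q * N)^2 - 1 \<noteq> 0" "N^2 - (1/real q)^2 \<noteq> 0"
      using qpos N qq unfolding e2 by (auto simp: power2_eq_square)
    show "2*(1/real q)^3/((real n+1)*((real n+1)^2 - (1/real q)^2)) = tt (real (q * Suc n))"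
      unfolding N_def[symmetric] qN using qN1 nz
      by (simp add: tt_alt divide_simps) (simp add: power2_eq_square power3_eq_cube algebra_simps)
  qed
  then show ?thesis using R_series[OF y] by simp
qed

lemma R_inv0:
  fixes q :: nat assumes q: "q \<ge> 2"
  shows "(\<lambda>n. tt (real (q * n))) sums R_fun (1 / real q)"
  using R_inv[OF q] sums_Suc_iff[of "\<lambda>n. tt (real (q*n))"] by simp

lemma R_pos: "q \<ge> 2 \<Longrightarrow> R_fun (1 / real q) > 0"
proof -
  assume q: "q \<ge> 2"
  have "0 < tt (real (q * Suc 0))" using q by (intro tt_pos) auto
  have h: "1 < real q + real q * real n" for n using gt1[OF q, of "Suc n"] by (simp add: algebra_simps)
  have "0 < suminf (\<lambda>n. tt (real (q * Suc n)))"
    by (rule suminf_pos) (use R_inv[OF q] q h in \<open>auto simp: sums_iff intro!: tt_pos\<close>)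
  then show ?thesis using R_inv[OF q] by (simp add: sums_iff)
qed

lemma R_alt:
  fixes k :: nat assumes k: "k \<ge> 2"
  shows "(\<lambda>n. (-1)^n * tt (real (k * n))) sums (2 * R_fun (1 / (2 * real k)) - R_fun (1 / real k))"
proof -
  have s1: "(\<lambda>n. tt (real (k * n))) sums R_fun (1 / real k)" using R_inv0[OF k] .
  have "(\<lambda>n. 2 * tt (real ((2*k) * n))) sums (2 * R_fun (1 / real (2*k)))"
    using R_inv0[of "2*k"] k by (intro sums_mult) auto
  hence "(\<lambda>n. (1 + (-1)^(2*n)) * tt (real (k * (2*n)))) sums (2 * R_fun (1 / (2 * real k)))"
    by (simp add: mult.commute mult.left_commute)
  hence s2: "(\<lambda>n. (1 + (-1)^n) * tt (real (k * n))) sums (2 * R_fun (1 / (2 * real k)))"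
    apply (subst (asm) sums_mono_reindex[of "\<lambda>n. 2*n"])
      apply (auto simp: strict_mono_def)
    subgoal for n by (cases "even n") (auto elim!: evenE)
    done
  have "(\<lambda>n. (1 + (-1)^n) * tt (real (k * n)) - tt (real (k * n))) sums (2 * R_fun (1 / (2 * real k)) - R_fun (1 / real k))"
    by (intro sums_diff s1 s2)
  then show ?thesis by (simp add: algebra_simps)
qed

lemma R_odd_neg:
  fixes k :: nat assumes k: "k \<ge> 2"
  shows "2 * R_fun (1 / (2 * real k)) - R_fun (1 / real k) < 0"
proof -
  have a: "(\<lambda>n. 2 * tt (real ((2*k) * Suc n))) sums (2 * R_fun (1 / real (2*k)))"
    using R_inv[of "2*k"] k by (intro sums_mult) auto
  have "2 * tt (real ((2*k) * Suc n)) < tt (real (k * Suc n))" for n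
  proof -
    have "real (k * Suc n) > 1" using gt1[OF k, of "Suc n"] by simp
    from tt_double[OF this] show ?thesis by (simp add: mult.assoc)
  qed
  hence p: "0 < tt (real (k * Suc n)) - 2 * tt (real ((2*k) * Suc n))" for n by simp
  have "(\<lambda>n. tt (real (k * Suc n)) - 2 * tt (real ((2*k) * Suc n))) sums (R_fun (1 / real k) - 2 * R_fun (1 / real (2*k)))"
    by (intro sums_diff a R_inv[OF k])
  hence "0 < R_fun (1 / real k) - 2 * R_fun (1 / real (2*k))"
    using suminf_pos[of "\<lambda>n. tt (real (k * Suc n)) - 2 * tt (real ((2*k) * Suc n))"] p by (auto simp: sums_iff)
  hence "2 * R_fun (1 / real (2*k)) < R_fun (1 / real k)" by simp
  then show ?thesis by simp
qed


lemma sum_split_add: "(\<Sum>i<a+b. f i) = (\<Sum>i<a. f i) + (\<Sum>i<b. f (a+i))" for f :: "nat \<Rightarrow> real"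
  by (induction b) (simp_all add: add.assoc)

lemma periodic_shift:
  fixes q :: nat assumes "\<And>i. f (i + k) = f i" shows "f (q*k + i) = f i"
proof (induction q)
  case (Suc q)
  have "f (Suc q * k + i) = f ((q*k + i) + k)" by (simp add: algebra_simps)
  also have "\<dots> = f (q*k+i)" by (rule assms)
  finally show ?case using Suc by simp
qed simp

lemma periodic_sum:
  fixes f :: "nat \<Rightarrow> real"
  assumes "\<And>i. f (i + k) = f i"
  shows "(\<Sum>i<n. f i) = real (n div k) * (\<Sum>i<k. f i) + (\<Sum>i<n mod k. f i)"
proof -
  have a: "(\<Sum>i<q*k. f i) = real q * (\<Sum>i<k. f i)" for q
  proof (induction q)
    case (Suc q)
    have "(\<Sum>i<Suc q*k. f i) = (\<Sum>i<q*k + k. f i)" by (simp add: algebra_simps)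
    also have "\<dots> = (\<Sum>i<q*k. f i) + (\<Sum>i<k. f (q*k+i))" by (rule sum_split_add)
    also have "(\<Sum>i<k. f (q*k+i)) = (\<Sum>i<k. f i)" using periodic_shift[of f k, OF assms] by simp
    finally show ?case using Suc by (simp add: algebra_simps)
  qed simp
  have "n = (n div k) * k + n mod k" by simp
  hence "(\<Sum>i<n. f i) = (\<Sum>i<(n div k) * k + n mod k. f i)" by metis
  also have "\<dots> = (\<Sum>i<(n div k) * k. f i) + (\<Sum>i<n mod k. f ((n div k) * k + i))" by (rule sum_split_add)
  also have "(\<Sum>i<n mod k. f ((n div k) * k + i)) = (\<Sum>i<n mod k. f i)"
    using periodic_shift[of f k, OF assms] by simp
  finally show ?thesis using a by simp
qed

lemma periodic_avg:
  fixes f :: "nat \<Rightarrow> real"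
  assumes per: "\<And>i. f (i + k) = f i" and k: "k > 0"
  shows "(\<lambda>n. (\<Sum>i<n. f i) / real n) \<longlonglongrightarrow> (\<Sum>i<k. f i) / real k"
proof -
  define P where "P = (\<Sum>i<k. f i)"
  define B where "B = (\<Sum>i<k. \<bar>f i\<bar>)"
  have eq: "(\<Sum>i<n. f i) / real n = (1 / real k) * P - (real (n mod k) / real k) * P / real n
            + (\<Sum>i<n mod k. f i) / real n" if n: "n > 0" for n
  proof -
    have "n = n div k * k + n mod k" by simp
    hence "real n = real (n div k * k + n mod k)" by (rule arg_cong)
    hence "real n = real (n div k) * real k + real (n mod k)" by (simp only: of_nat_add of_nat_mult)
    hence d: "real (n div k) = (real n - real (n mod k)) / real k" using k by (simp add: field_simps)
    have "(\<Sum>i<n. f i) / real n = (real (n div k) * P + (\<Sum>i<n mod k. f i)) / real n"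
      unfolding periodic_sum[of f k n, OF per] P_def by simp
    also have "\<dots> = (1 / real k) * P - (real (n mod k) / real k) * P / real n + (\<Sum>i<n mod k. f i) / real n"
      unfolding d using n k by (simp add: field_simps)
    finally show ?thesis .
  qed
  have l1: "(\<lambda>n. (real (n mod k) / real k) * P / real n) \<longlonglongrightarrow> 0"
  proof (rule Lim_null_comparison)
    show "\<forall>\<^sub>F n in sequentially. norm (real (n mod k) / real k * P / real n) \<le> \<bar>P\<bar> / real n"
    proof (intro always_eventually allI)
      fix n
      have "real (n mod k) / real k \<le> 1" using k by simp
      hence "real (n mod k) / real k * \<bar>P\<bar> \<le> \<bar>P\<bar>"
        by (intro mult_left_le_one_le) auto
      hence "\<bar>real (n mod k) / real k * P\<bar> \<le> \<bar>P\<bar>"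
        by (simp add: abs_mult)
      hence "\<bar>real (n mod k) / real k * P\<bar> / real n \<le> \<bar>P\<bar> / real n"
        by (rule divide_right_mono) simp
      thus "norm (real (n mod k) / real k * P / real n) \<le> \<bar>P\<bar> / real n"
        by (simp only: real_norm_def abs_divide abs_of_nat)
    qed
  qed (intro tendsto_intros)
  have l2: "(\<lambda>n. (\<Sum>i<n mod k. f i) / real n) \<longlonglongrightarrow> 0"
  proof (rule Lim_null_comparison)
    show "\<forall>\<^sub>F n in sequentially. norm ((\<Sum>i<n mod k. f i) / real n) \<le> B / real n"
    proof (intro always_eventually allI)
      fix n
      have "\<bar>\<Sum>i<n mod k. f i\<bar> \<le> (\<Sum>i<n mod k. \<bar>f i\<bar>)" by (rule sum_abs)
      also have "\<dots> \<le> B" unfolding B_def using k by (intro sum_mono2) auto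
      finally have "\<bar>\<Sum>i<n mod k. f i\<bar> / real n \<le> B / real n"
        by (rule divide_right_mono) simp
      thus "norm ((\<Sum>i<n mod k. f i) / real n) \<le> B / real n"
        by (simp only: real_norm_def abs_divide abs_of_nat)
    qed
  qed (intro tendsto_intros)
  have "(\<lambda>n. (1 / real k) * P - (real (n mod k) / real k) * P / real n + (\<Sum>i<n mod k. f i) / real n)
        \<longlonglongrightarrow> (1 / real k) * P - 0 + 0"
    by (intro tendsto_intros l1 l2)
  hence "(\<lambda>n. (1 / real k) * P - (real (n mod k) / real k) * P / real n + (\<Sum>i<n mod k. f i) / real n)
        \<longlonglongrightarrow> P / real k" by simp
  then show ?thesis unfolding P_def[symmetric]
  proof (rule Lim_transform_eventually)
    show "\<forall>\<^sub>F n in sequentially. (1 / real k) * P - (real (n mod k) / real k) * P / real n + (\<Sum>i<n mod k. f i) / real n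
         = (\<Sum>i<n. f i) / real n"
      using eventually_gt_at_top[of "0::nat"] by (rule eventually_mono) (use eq in simp)
  qed
qed


lemma cos_plus_2pi_nat: "cos (x + 2*pi*real s) = cos x"
proof (induction s)
  case (Suc s)
  have eq: "x + 2*pi*real (Suc s) = (x + 2*pi*real s) + 2*pi" by (simp add: algebra_simps)
  show ?case by (simp only: eq cos_periodic Suc.IH)
qed simp

lemma cos_sum_roots:
  fixes s k j :: nat
  assumes k: "0 < k" and cop: "coprime s k"
  shows "(\<Sum>i<k. cos (real j * (real i * (2*pi*real s/real k)))) = (if k dvd j then real k else 0)"
proof -
  define \<beta> where "\<beta> = 2*pi*real s/real k"
  define z where "z = cis (real j * \<beta>)"
  have zi: "cos (real j * (real i * \<beta>)) = Re (z ^ i)" for i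
  proof -
    have "z^i = cis (real i * (real j * \<beta>))" by (simp add: z_def Complex.DeMoivre)
    then show ?thesis by (simp add: mult.left_commute)
  qed
  have sum: "(\<Sum>i<k. cos (real j * (real i * \<beta>))) = Re (\<Sum>i<k. z^i)" by (simp add: zi)
  have kb: "real k * \<beta> = 2*pi*real s" using k by (simp add: \<beta>_def)
  show ?thesis
  proof (cases "k dvd j")
    case True
    then obtain m where m: "j = k*m" by blast
    have "real j * \<beta> = 2*pi*real (m * s)"
    proof -
      have "real j * \<beta> = real m * (real k * \<beta>)" using m by (simp add: algebra_simps)
      also have "\<dots> = 2*pi*real (m * s)" using kb by simp
      finally show ?thesis .
    qed
    moreover have "cis (2*pi*real (m * s)) = 1" by (rule cis_multiple_2pi) simp
    ultimately have "z = 1" by (simp add: z_def)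
    then show ?thesis using True sum by (simp add: \<beta>_def)
  next
    case False
    have "z^k = cis (real k * (real j * \<beta>))" by (simp add: z_def Complex.DeMoivre)
    also have "real k * (real j * \<beta>) = 2*pi*real (j * s)" using kb by (simp add: algebra_simps)
    also have "cis (2*pi*real (j * s)) = 1" by (rule cis_multiple_2pi) simp
    finally have zk: "z^k = 1" .
    have z1: "z \<noteq> 1"
    proof
      assume "z = 1"
      hence "Re z = 1" by simp
      hence "cos (real j * \<beta>) = 1" by (simp add: z_def)
      then obtain n :: int where n: "real j * \<beta> = of_int n * 2 * pi" by (auto simp: cos_one_2pi_int)
      have "real (j * s) = of_int n * real k"
      proof -
        have "2*pi*real (j * s) = real k * (real j * \<beta>)" using kb by (simp add: algebra_simps)
        also have "\<dots> = 2*pi*(of_int n * real k)" using n by (simp add: algebra_simps)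
        finally show ?thesis by simp
      qed
      hence "of_int (int (j * s)) = (of_int (n * int k) :: real)" by simp
      hence "int (j * s) = n * int k" by (rule of_int_eq_iff[THEN iffD1])
      hence "int k dvd int (j * s)" by simp
      hence "k dvd j * s" by (simp only: of_nat_dvd_iff)
      moreover have "coprime k s" using cop by (simp add: coprime_commute)
      ultimately have "k dvd j" using coprime_dvd_mult_left_iff by blast
      with False show False by simp
    qed
    have "(\<Sum>i<k. z^i) = 0" using zk z1 by (simp add: sum_gp_strict)
    then show ?thesis using False sum by (simp add: \<beta>_def)
  qed
qed

lemma cheb_sq:
  assumes "0 \<le> \<theta>" "\<theta> \<le> pi"
  shows "pi * (cheb_p i (cos \<theta>))^2 = (if i = 0 then 1 else 1 + cos (real i * (2*\<theta>)))"
proof (cases "i = 0")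
  case True
  then show ?thesis by (simp add: cheb_p_def power_divide)
next
  case False
  have c: "cos (real i * (2*\<theta>)) = 2 * cos (real i * \<theta>)^2 - 1"
    using cos_double_cos[of "real i * \<theta>"] by (simp add: algebra_simps)
  show ?thesis using False assms
    by (simp add: cheb_p_def arccos_cos power_mult_distrib c)
qed

lemma entropy_eq:
  assumes n: "n > 0"
  shows "entropy_Psi n x = ln (\<Sum>i<n. pi*(cheb_p i x)^2)
     - (\<Sum>i<n. pi*(cheb_p i x)^2 * ln (pi*(cheb_p i x)^2)) / (\<Sum>i<n. pi*(cheb_p i x)^2)"
proof -
  define v where "v i = pi*(cheb_p i x)^2" for i
  define W where "W = (\<Sum>i<n. v i)"
  have v0: "v 0 = 1" by (simp add: v_def cheb_p_def power_divide)
  have vnn: "v i \<ge> 0" for i by (simp add: v_def)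
  have "v 0 \<le> W" unfolding W_def using n vnn by (intro member_le_sum) auto
  hence W1: "W \<ge> 1" using v0 by simp
  have cs: "(\<Sum>i<n. (cheb_p i x)^2) = W / pi" unfolding W_def v_def
    by (simp add: sum_divide_distrib)
  have Psi: "Psi n (Suc i) x = v i / W" for i
    by (simp add: Psi_def christoffel_def cs v_def)
  have trm: "(if Psi n (Suc i) x = 0 then 0 else Psi n (Suc i) x * ln (Psi n (Suc i) x))
     = v i * ln (v i) / W - v i / W * ln W" for i
  proof (cases "v i = 0")
    case True then show ?thesis by (simp add: Psi)
  next
    case False
    hence vp: "v i > 0" using vnn[of i] by simp
    have lnd: "ln (v i / W) = ln (v i) - ln W" using vp W1 by (simp add: ln_div)
    have "Psi n (Suc i) x \<noteq> 0" using vp W1 by (simp add: Psi)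
    then have "(if Psi n (Suc i) x = 0 then 0 else Psi n (Suc i) x * ln (Psi n (Suc i) x)) = v i / W * ln (v i / W)"
      by (simp add: Psi)
    also have "\<dots> = v i / W * (ln (v i) - ln W)" by (simp only: lnd)
    also have "\<dots> = v i * ln (v i) / W - v i / W * ln W" by (simp add: right_diff_distrib)
    finally show ?thesis .
  qed
  have e1: "{1..n} = {Suc 0..n}" by simp
  have "entropy_Psi n x = - (\<Sum>i<n. v i * ln (v i) / W - v i / W * ln W)"
    unfolding entropy_Psi_def e1 sum.atLeast1_atMost_eq trm by simp
  also have "\<dots> = ln W * ((\<Sum>i<n. v i) / W) - (\<Sum>i<n. v i * ln (v i)) / W"
    by (simp add: sum_subtractf sum_divide_distrib sum_distrib_left algebra_simps)
  also have "(\<Sum>i<n. v i) / W = 1" using W1 by (simp add: W_def)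
  finally show ?thesis by (simp add: W_def v_def)
qed


lemma main_limit:
  fixes s k :: nat and \<theta> :: real
  assumes s: "0 < s" "s < k" and cop: "coprime s k" and th: "\<theta> = pi * real s / real k"
  shows "(\<lambda>n. ln (real n) - entropy_Psi n (cos \<theta>)) \<longlonglongrightarrow>
           (\<Sum>i<k. (1 + cos (real i * (2*\<theta>))) * ln (1 + cos (real i * (2*\<theta>)))) / real k"
proof -
  define w where "w i = 1 + cos (real i * (2*\<theta>))" for i
  define C where "C = (\<Sum>i<k. w i * ln (w i))"
  have k: "k > 0" "k > 1" using s by auto
  have th0: "0 \<le> \<theta>" using th by simp
  have th1: "\<theta> \<le> pi"
  proof -
    have "real s / real k \<le> 1" using s by simp
    hence "pi * (real s / real k) \<le> pi * 1" by (intro mult_left_mono) auto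
    thus ?thesis using th by simp
  qed
  have t2: "2*\<theta> = 2*pi*real s/real k" using th by simp
  have kt: "real k * (2*\<theta>) = 2*pi*real s" using k t2 by simp
  have wper: "w (i + k) = w i" for i
  proof -
    have "real (i+k) * (2*\<theta>) = real i * (2*\<theta>) + 2*pi*real s" using kt by (simp add: algebra_simps)
    then show ?thesis by (simp add: w_def cos_plus_2pi_nat)
  qed
  have wnn: "w i \<ge> 0" for i unfolding w_def using cos_ge_minus_one[of "real i * (2*\<theta>)"] by linarith
  have sumcos: "(\<Sum>i<k. cos (real i * (2*\<theta>))) = 0"
    using cos_sum_roots[OF k(1) cop, of 1] k by (simp add: t2)
  have sumw: "(\<Sum>i<k. w i) = real k" by (simp add: w_def sum.distrib sumcos)
  have v: "pi * (cheb_p i (cos \<theta>))^2 = (if i = 0 then 1 else w i)" for i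
    using cheb_sq[OF th0 th1] by (simp add: w_def)
  have w0: "w 0 = 2" by (simp add: w_def)
  define V where "V n = (\<Sum>i<n. (if i = 0 then 1 else w i))" for n
  define HV where "HV n = (\<Sum>i<n. (if i = 0 then 1 else w i) * ln (if i = 0 then 1 else w i))" for n
  have V1: "V n \<ge> 1" if "n > 0" for n
  proof -
    have "(if 0 = (0::nat) then 1 else w 0) \<le> V n" unfolding V_def using that wnn
      by (intro member_le_sum) auto
    thus ?thesis by simp
  qed
  have Veq: "V n = (\<Sum>i<n. w i) - 1" if "n > 0" for n
  proof -
    have "V n = (\<Sum>i<n. w i - (if i = 0 then 1 else 0))" unfolding V_def
      by (intro sum.cong) (auto simp: w0)
    also have "\<dots> = (\<Sum>i<n. w i) - 1" using that by (simp add: sum_subtractf)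
    finally show ?thesis .
  qed
  have HVeq: "HV n = (\<Sum>i<n. w i * ln (w i)) - 2 * ln 2" if "n > 0" for n
  proof -
    have "HV n = (\<Sum>i<n. w i * ln (w i) - (if i = 0 then 2 * ln 2 else 0))" unfolding HV_def
      by (intro sum.cong) (auto simp: w0)
    also have "\<dots> = (\<Sum>i<n. w i * ln (w i)) - 2 * ln 2" using that by (simp add: sum_subtractf)
    finally show ?thesis .
  qed
  have A1: "(\<lambda>n. (\<Sum>i<n. w i) / real n) \<longlonglongrightarrow> 1"
    using periodic_avg[of w k, OF wper k(1)] sumw k by simp
  have A2: "(\<lambda>n. (\<Sum>i<n. w i * ln (w i)) / real n) \<longlonglongrightarrow> C / real k"
    using periodic_avg[of "\<lambda>i. w i * ln (w i)" k] wper k(1) unfolding C_def by simp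
  have L1: "(\<lambda>n. V n / real n) \<longlonglongrightarrow> 1"
  proof -
    have "(\<lambda>n. (\<Sum>i<n. w i) / real n - 1 / real n) \<longlonglongrightarrow> 1 - 0"
      by (intro tendsto_intros A1)
    then have "(\<lambda>n. (\<Sum>i<n. w i) / real n - 1 / real n) \<longlonglongrightarrow> 1" by simp
    then show ?thesis
    proof (rule Lim_transform_eventually)
      show "\<forall>\<^sub>F n in sequentially. (\<Sum>i<n. w i) / real n - 1 / real n = V n / real n"
        using eventually_gt_at_top[of "0::nat"]
        by (rule eventually_mono) (simp add: Veq diff_divide_distrib)
    qed
  qed
  have L2: "(\<lambda>n. HV n / real n) \<longlonglongrightarrow> C / real k"
  proof -
    have "(\<lambda>n. (\<Sum>i<n. w i * ln (w i)) / real n - (2 * ln 2) / real n) \<longlonglongrightarrow> C / real k - 0"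
      by (intro tendsto_intros A2)
    then have "(\<lambda>n. (\<Sum>i<n. w i * ln (w i)) / real n - (2 * ln 2) / real n) \<longlonglongrightarrow> C / real k" by simp
    then show ?thesis
    proof (rule Lim_transform_eventually)
      show "\<forall>\<^sub>F n in sequentially. (\<Sum>i<n. w i * ln (w i)) / real n - (2 * ln 2) / real n = HV n / real n"
        using eventually_gt_at_top[of "0::nat"]
        by (rule eventually_mono) (simp add: HVeq diff_divide_distrib)
    qed
  qed
  have L: "(\<lambda>n. - ln (V n / real n) + (HV n / real n) / (V n / real n)) \<longlonglongrightarrow> - ln 1 + (C / real k) / 1"
    by (intro tendsto_intros L1 L2) auto
  have ev: "ln (real n) - entropy_Psi n (cos \<theta>) = - ln (V n / real n) + (HV n / real n) / (V n / real n)"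
    if n: "n > 0" for n
  proof -
    have e: "entropy_Psi n (cos \<theta>) = ln (V n) - HV n / V n"
      unfolding entropy_eq[OF n] V_def HV_def v ..
    have "V n > 0" using V1[OF n] by simp
    then show ?thesis unfolding e using n by (simp add: ln_div)
  qed
  have "(\<lambda>n. ln (real n) - entropy_Psi n (cos \<theta>)) \<longlonglongrightarrow> C / real k"
  proof (rule Lim_transform_eventually)
    show "(\<lambda>n. - ln (V n / real n) + (HV n / real n) / (V n / real n)) \<longlonglongrightarrow> C / real k"
      using L by simp
    show "\<forall>\<^sub>F n in sequentially. - ln (V n / real n) + (HV n / real n) / (V n / real n) = ln (real n) - entropy_Psi n (cos \<theta>)"
      using eventually_gt_at_top[of "0::nat"] by (rule eventually_mono) (simp add: ev)
  qed
  thus ?thesis unfolding C_def w_def .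
qed


lemma ln_series_cos:
  fixes r a :: real assumes r: "0 \<le> r" "r < 1"
  shows "(\<lambda>m. 2 * (-1)^Suc m / real m * r^m * cos (real m * a)) sums ln (1 + 2*r*cos a + r^2)"
proof -
  define z where "z = complex_of_real r * cis a"
  have nz: "norm z < 1" using r by (simp add: z_def norm_mult)
  have s: "(\<lambda>m. (-1)^Suc m / of_nat m * z^m) sums ln (1 + z)" by (rule Ln_series[OF nz])
  hence s': "(\<lambda>m. Re ((-1)^Suc m / of_nat m * z^m)) sums Re (ln (1 + z))"
    by (simp add: sums_complex_iff)
  have t: "Re ((-1)^Suc m / of_nat m * z^m) = (-1)^Suc m / real m * r^m * cos (real m * a)" for m
  proof -
    have zm: "z^m = complex_of_real (r^m) * cis (real m * a)"
      by (simp add: z_def power_mult_distrib Complex.DeMoivre)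
    have eq: "(-1)^Suc m / of_nat m * z^m = complex_of_real ((-1)^Suc m / real m * r^m) * cis (real m * a)"
      unfolding zm by simp
    show ?thesis unfolding eq by simp
  qed
  have z1: "1 + z \<noteq> 0"
  proof
    assume "1 + z = 0"
    hence "z = -1" by (simp add: add_eq_0_iff)
    with nz show False by simp
  qed
  have re: "Re (1 + z) = 1 + r * cos a" "Im (1 + z) = r * sin a" by (simp_all add: z_def)
  have "(norm (1 + z))^2 = (1 + r * cos a)^2 + (r * sin a)^2" unfolding cmod_power2 re ..
  also have "\<dots> = 1 + 2*r*cos a + r^2 * ((sin a)^2 + (cos a)^2)" by algebra
  also have "(sin a)^2 + (cos a)^2 = 1" by (rule sin_cos_squared_add)
  finally have nsq: "(norm (1 + z))^2 = 1 + 2*r*cos a + r^2" by simp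
  have "Re (ln (1 + z)) = ln (norm (1 + z))" using z1 by simp
  also have "norm (1 + z) = sqrt (1 + 2*r*cos a + r^2)" unfolding nsq[symmetric] by simp
  also have "ln \<dots> = ln (1 + 2*r*cos a + r^2) / 2"
  proof (rule ln_sqrt)
    have "0 \<le> (norm (1 + z))^2" by simp
    thus "0 \<le> 1 + 2*r*cos a + r^2" unfolding nsq .
  qed
  finally have eqR: "Re (ln (1 + z)) = ln (1 + 2*r*cos a + r^2) / 2" .
  have "(\<lambda>m. (-1)^Suc m / real m * r^m * cos (real m * a)) sums Re (ln (1 + z))"
    using s' unfolding t .
  hence "(\<lambda>m. (-1)^Suc m / real m * r^m * cos (real m * a)) sums (ln (1 + 2*r*cos a + r^2) / 2)"
    unfolding eqR .
  hence "(\<lambda>m. 2 * ((-1)^Suc m / real m * r^m * cos (real m * a))) sums (2 * (ln (1 + 2*r*cos a + r^2) / 2))"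
    by (rule sums_mult)
  then show ?thesis by (simp add: mult.assoc)
qed

lemma pow_bound:
  fixes r :: real assumes r: "0 \<le> r" "r \<le> 1" and m: "m \<ge> 1"
  shows "real m * r^(m-1) * (1 - r) \<le> 1"
proof -
  have "(\<Sum>j<m. r^(m-1)) \<le> (\<Sum>j<m. r^j)"
    by (intro sum_mono power_decreasing) (use r in auto)
  hence "real m * r^(m-1) \<le> (\<Sum>j<m. r^j)" by simp
  hence "real m * r^(m-1) * (1 - r) \<le> (\<Sum>j<m. r^j) * (1 - r)"
    by (rule mult_right_mono) (use r in auto)
  also have "\<dots> = 1 - r^m" using one_diff_power_eq[of r m] by (simp add: mult.commute)
  also have "\<dots> \<le> 1" using r by simp
  finally show ?thesis .
qed

lemma grp_bound:
  fixes r :: real assumes r: "0 \<le> r" "r \<le> 1" and m: "m \<ge> 2"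
  shows "\<bar>r^(m-1)/(real m - 1) - 2*r^m/real m + r^(m+1)/(real m + 1)\<bar> \<le> 3 / (real m * (real m - 1))"
proof -
  define M where "M = real m"
  define p where "p = r^(m-1)"
  have M2: "M \<ge> 2" using m by (simp add: M_def)
  have p0: "0 \<le> p" "p \<le> 1" using r by (auto simp: p_def power_le_one)
  have pm: "r^m = p * r" "r^(m+1) = p * r^2" using m
    by (auto simp: p_def power2_eq_square simp flip: power_Suc2)
  have E: "r^(m-1)/(M - 1) - 2*r^m/M + r^(m+1)/(M + 1)
      = p * (1-r)^2 / M + p / (M * (M - 1)) - p * r^2 / (M * (M + 1))"
  proof -
    have nz: "M \<noteq> 0" "M - 1 \<noteq> 0" "M + 1 \<noteq> 0" using M2 by auto
    show ?thesis unfolding pm p_def[symmetric] using nz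
      by (simp add: divide_simps) (simp add: power2_eq_square algebra_simps)
  qed
  have b1: "p * (1-r)^2 / M \<le> 1 / (M * (M - 1))"
  proof -
    have "M * p * (1 - r) \<le> 1" using pow_bound[OF r, of m] m by (simp add: M_def p_def)
    hence "p * (1 - r) \<le> 1 / M" using M2 by (simp add: field_simps)
    moreover have "p * (1-r)^2 \<le> p * (1 - r)" using p0 r
      by (simp add: power2_eq_square mult_left_le_one_le mult.assoc mult_left_mono)
    ultimately have "p * (1-r)^2 \<le> 1 / M" by linarith
    hence "p * (1-r)^2 / M \<le> 1 / M / M" by (rule divide_right_mono) (use M2 in simp)
    also have "1 / M / M \<le> 1 / (M * (M - 1))" using M2
      by (simp add: divide_simps)
    finally show ?thesis .
  qed
  have b0: "0 \<le> p * (1-r)^2 / M" using p0 M2 by simp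
  have b2: "p / (M * (M - 1)) \<le> 1 / (M * (M - 1))" using p0 M2 by (simp add: divide_right_mono)
  have b2': "0 \<le> p / (M * (M - 1))" using p0 M2 by simp
  have b3: "p * r^2 / (M * (M + 1)) \<le> 1 / (M * (M - 1))"
  proof -
    have "p * r^2 \<le> 1" using p0 r by (simp add: mult_le_one power_le_one)
    hence "p * r^2 / (M * (M + 1)) \<le> 1 / (M * (M + 1))" using M2 by (simp add: divide_right_mono)
    also have "\<dots> \<le> 1 / (M * (M - 1))" using M2 by (simp add: divide_simps)
    finally show ?thesis .
  qed
  have b3': "0 \<le> p * r^2 / (M * (M + 1))" using p0 M2 r by simp
  have "\<bar>p * (1-r)^2 / M + p / (M * (M - 1)) - p * r^2 / (M * (M + 1))\<bar> \<le> 3 / (M * (M - 1))"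
    using b0 b1 b2 b2' b3 b3' by (intro abs_leI) linarith+
  hence fin: "\<bar>r^(m-1)/(M - 1) - 2*r^m/M + r^(m+1)/(M + 1)\<bar> \<le> 3 / (M * (M - 1))"
    unfolding E .
  show ?thesis using fin[unfolded M_def] .
qed


definition bb :: "real \<Rightarrow> nat \<Rightarrow> real" where "bb r m = 2 * (-1)^Suc m / real m * r^m"
definition gg :: "nat \<Rightarrow> nat \<Rightarrow> real \<Rightarrow> real" where
  "gg k N r = bb r (k*N - 1)/2 + bb r (k*N) + bb r (k*N+1)/2"
definition cf :: "nat \<Rightarrow> nat \<Rightarrow> real" where
  "cf k m = (if k dvd m then 1 else 0) + ((if k dvd (m-1) then 1 else 0) + (if k dvd (m+1) then 1 else 0)) / 2"

lemma bb0 [simp]: "bb r 0 = 0" by (simp add: bb_def)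
lemma bb1: "bb r 1 = 2 * r" by (simp add: bb_def)
lemma bb1s [simp]: "bb r (Suc 0) = 2 * r" by (simp add: bb_def)

lemma bb_abs: "0 \<le> r \<Longrightarrow> \<bar>bb r m\<bar> \<le> 2 * r^m"
proof (cases "m = 0")
  case False
  assume r: "0 \<le> r"
  have "\<bar>bb r m\<bar> = 2 / real m * r^m" using r by (simp add: bb_def abs_mult power_abs)
  also have "\<dots> \<le> 2 * r^m" using False r by (simp add: divide_le_eq mult_le_cancel_right1 field_simps)
  finally show ?thesis .
qed simp

lemma gg_eq:
  assumes "k * N \<ge> 2"
  shows "gg k N r = (-1)^(k*N) * (r^(k*N-1)/(real (k*N) - 1) - 2*r^(k*N)/real (k*N) + r^(k*N+1)/(real (k*N)+1))"
proof -
  define m where "m = k*N"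
  have m: "m \<ge> 2" using assms by (simp add: m_def)
  have a: "real (m - 1) = real m - 1" using m by (simp add: of_nat_diff)
  have b: "(-1::real)^Suc (m-1) = (-1)^m" using m by (cases m) auto
  have nz: "real m - 1 \<noteq> 0" "real m * 2 - 2 \<noteq> 0" using m by auto
  have t1: "bb r (m-1)/2 = (-1)^m * (r^(m-1)/(real m - 1))"
    unfolding bb_def a b using nz by (simp add: field_simps)
  have t2: "bb r m = (-1)^m * (- (2*r^m/real m))"
    unfolding bb_def by simp
  have nz3: "real m + 1 \<noteq> 0" "2 + real m * 2 \<noteq> 0" by (simp_all add: add_pos_nonneg add_nonneg_pos)
  have t3: "bb r (m+1)/2 = (-1)^m * (r^(m+1)/(real m + 1))"
    unfolding bb_def using nz3 by (simp add: field_simps)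
  show ?thesis unfolding gg_def m_def[symmetric] t1 t2 t3
    by (simp add: algebra_simps)
qed

lemma gg_bound:
  assumes k: "k > 1" and N: "N \<ge> 1" and r: "0 \<le> r" "r \<le> 1"
  shows "\<bar>gg k N r\<bar> \<le> 3 / (real N)^2"
proof -
  have kN: "k * N \<ge> 2 * N" using k by simp
  have m2: "k * N \<ge> 2" using kN N by linarith
  have "\<bar>gg k N r\<bar> = \<bar>r^(k*N-1)/(real (k*N) - 1) - 2*r^(k*N)/real (k*N) + r^(k*N+1)/(real (k*N)+1)\<bar>"
    unfolding gg_eq[OF m2] by (simp add: abs_mult)
  also have "\<dots> \<le> 3 / (real (k*N) * (real (k*N) - 1))" by (rule grp_bound[OF r m2])
  also have "\<dots> \<le> 3 / (real N)^2"
  proof -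
    define M where "M = real (k*N)"
    have "real (2*N) \<le> M" unfolding M_def using kN by (rule of_nat_mono)
    hence M1: "real N \<le> M" "real N \<le> M - 1" using N by auto
    have Np: "real N > 0" using N by simp
    have "real N * real N \<le> M * (M - 1)"
      using M1 Np by (intro mult_mono) auto
    moreover have "0 < real N * real N" using Np by simp
    ultimately have "3 / (M * (M - 1)) \<le> 3 / (real N * real N)"
      by (intro divide_left_mono) (auto intro: mult_pos_pos)
    thus ?thesis by (simp add: M_def power2_eq_square)
  qed
  finally show ?thesis .
qed

lemma gg_one:
  assumes "k * N \<ge> 2"
  shows "gg k N 1 = (-1)^(k*N) * tt (real (k*N))"
  unfolding gg_eq[OF assms] tt_def by simp

lemma trig_avg:
  fixes s k m :: nat
  assumes k: "k > 0" and cop: "coprime s k" and m: "m \<ge> 1"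
  shows "(\<Sum>i<k. (1 + cos (real i * (2*pi*real s/real k))) * cos (real m * (real i * (2*pi*real s/real k))))
         = real k * cf k m"
proof -
  define \<beta> where "\<beta> = 2*pi*real s/real k"
  have pt: "(1 + cos (real i * \<beta>)) * cos (real m * (real i * \<beta>))
      = cos (real m * (real i * \<beta>)) + (cos (real (m-1) * (real i * \<beta>)) + cos (real (m+1) * (real i * \<beta>))) / 2" for i
  proof -
    have e1: "real (m-1) * (real i * \<beta>) = real m * (real i * \<beta>) - real i * \<beta>" using m
      by (simp add: of_nat_diff algebra_simps)
    have e2: "real (m+1) * (real i * \<beta>) = real m * (real i * \<beta>) + real i * \<beta>"
      by (simp add: algebra_simps)
    show ?thesis unfolding e1 e2 using cos_times_cos[of "real m * (real i * \<beta>)" "real i * \<beta>"]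
      by (simp add: algebra_simps)
  qed
  have "(\<Sum>i<k. (1 + cos (real i * \<beta>)) * cos (real m * (real i * \<beta>)))
     = (\<Sum>i<k. cos (real m * (real i * \<beta>))) + ((\<Sum>i<k. cos (real (m-1) * (real i * \<beta>))) + (\<Sum>i<k. cos (real (m+1) * (real i * \<beta>)))) / 2"
    unfolding pt by (simp add: sum.distrib flip: sum_divide_distrib)
  also have "\<dots> = real k * cf k m"
    unfolding \<beta>_def cos_sum_roots[OF k cop] cf_def by (simp add: algebra_simps)
  finally show ?thesis unfolding \<beta>_def .
qed

lemma G_series:
  fixes s k :: nat and r :: real
  assumes k: "k > 0" and cop: "coprime s k" and r: "0 \<le> r" "r < 1"
  shows "(\<lambda>m. real k * (bb r m * cf k m)) sums
     (\<Sum>i<k. (1 + cos (real i * (2*pi*real s/real k))) * ln (1 + 2*r*cos (real i * (2*pi*real s/real k)) + r^2))"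
proof -
  define \<beta> where "\<beta> = 2*pi*real s/real k"
  have each: "(\<lambda>m. (1 + cos (real i * \<beta>)) * (bb r m * cos (real m * (real i * \<beta>)))) sums
      ((1 + cos (real i * \<beta>)) * ln (1 + 2*r*cos (real i * \<beta>) + r^2))" for i
    using ln_series_cos[OF r, of "real i * \<beta>"] unfolding bb_def by (intro sums_mult) simp
  have "(\<lambda>m. \<Sum>i<k. (1 + cos (real i * \<beta>)) * (bb r m * cos (real m * (real i * \<beta>)))) sums
      (\<Sum>i<k. (1 + cos (real i * \<beta>)) * ln (1 + 2*r*cos (real i * \<beta>) + r^2))"
    by (rule sums_sum) (rule each)
  moreover have "(\<Sum>i<k. (1 + cos (real i * \<beta>)) * (bb r m * cos (real m * (real i * \<beta>))))
       = real k * (bb r m * cf k m)" for m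
  proof (cases "m = 0")
    case True then show ?thesis by simp
  next
    case False
    have "(\<Sum>i<k. (1 + cos (real i * \<beta>)) * (bb r m * cos (real m * (real i * \<beta>))))
        = bb r m * (\<Sum>i<k. (1 + cos (real i * \<beta>)) * cos (real m * (real i * \<beta>)))"
      by (simp add: sum_distrib_left algebra_simps)
    also have "\<dots> = bb r m * (real k * cf k m)"
      unfolding \<beta>_def using trig_avg[OF k cop, of m] False by simp
    finally show ?thesis by simp
  qed
  ultimately show ?thesis unfolding \<beta>_def by simp
qed

lemma split3:
  assumes k: "k > 1" and r: "0 \<le> r" "r < 1" and S: "(\<lambda>m. bb r m * cf k m) sums S"
  shows "(\<lambda>n. gg k (Suc n) r) sums (S - r)"
proof -
  have geo: "summable (\<lambda>m. 2 * r^m)" using r by (intro summable_mult summable_geometric) simp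
  have sm: "summable f" if "\<And>m. \<bar>f m\<bar> \<le> \<bar>bb r m\<bar>" for f
  proof (rule summable_comparison_test[OF _ geo])
    show "\<exists>N. \<forall>n\<ge>N. norm (f n) \<le> 2 * r ^ n"
      using that bb_abs[OF r(1)] by (metis order_trans real_norm_def)
  qed
  define X1 where "X1 m = (if k dvd m then bb r m else 0)" for m
  define X2 where "X2 m = (if k dvd (m+1) then bb r m else 0)" for m
  define X3 where "X3 m = (if k dvd (m-1) then bb r m else 0)" for m
  have d: "bb r m * cf k m = X1 m + X2 m / 2 + X3 m / 2" for m
    by (simp add: cf_def X1_def X2_def X3_def algebra_simps)
  have s1: "X1 sums (suminf X1)" by (intro summable_sums sm) (simp add: X1_def)
  have s2: "X2 sums (suminf X2)" by (intro summable_sums sm) (simp add: X2_def)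
  have s3: "X3 sums (suminf X3)" by (intro summable_sums sm) (simp add: X3_def)
  have "(\<lambda>m. X1 m + X2 m / 2 + X3 m / 2) sums (suminf X1 + suminf X2 / 2 + suminf X3 / 2)"
    by (intro sums_add sums_divide s1 s2 s3)
  hence "(\<lambda>m. bb r m * cf k m) sums (suminf X1 + suminf X2 / 2 + suminf X3 / 2)" by (simp only: d)
  hence Seq: "S = suminf X1 + suminf X2 / 2 + suminf X3 / 2" using S sums_unique2 by blast
  have k0: "k > 0" using k by simp
  have "(\<lambda>n. X1 (k*n)) sums (suminf X1)"
  proof (subst sums_mono_reindex)
    show "strict_mono (\<lambda>n. k*n)" using k0 by (intro strict_monoI) simp
    show "X1 m = 0" if "m \<notin> range (\<lambda>n. k*n)" for m
      using that by (auto simp: X1_def elim!: dvdE)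
  qed (rule s1)
  hence "(\<lambda>n. bb r (k*n)) sums (suminf X1)" by (simp add: X1_def)
  hence r1: "(\<lambda>n. bb r (k * Suc n)) sums (suminf X1)"
    using sums_Suc_iff[of "\<lambda>n. bb r (k*n)"] by simp
  have "(\<lambda>n. X2 (k*n + (k-1))) sums (suminf X2)"
  proof (subst sums_mono_reindex)
    show "strict_mono (\<lambda>n. k*n + (k-1))"
    proof (intro strict_monoI)
      fix x y :: nat assume "x < y"
      hence "k*x < k*y" using k0 by simp
      thus "k*x + (k-1) < k*y + (k-1)" by (rule add_strict_right_mono)
    qed
    show "X2 m = 0" if "m \<notin> range (\<lambda>n. k*n + (k-1))" for m
    proof (rule ccontr)
      assume "X2 m \<noteq> 0"
      hence "k dvd (m+1)" by (simp add: X2_def split: if_splits)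
      then obtain q where q: "m + 1 = k * q" by (elim dvdE)
      then obtain q' where q': "q = Suc q'" by (cases q) auto
      have "m = k*q' + (k-1)" using q q' k0 by simp
      with that show False by auto
    qed
  qed (rule s2)
  moreover have "X2 (k*n + (k-1)) = bb r (k * Suc n - 1)" for n
  proof -
    have "k*n + (k-1) + 1 = k * Suc n" using k0 by simp
    moreover have "k*n + (k-1) = k * Suc n - 1" using k0 by simp
    ultimately show ?thesis by (simp add: X2_def)
  qed
  ultimately have r2: "(\<lambda>n. bb r (k * Suc n - 1)) sums (suminf X2)" by simp
  have "(\<lambda>n. X3 (k*n + 1)) sums (suminf X3)"
  proof (subst sums_mono_reindex)
    show "strict_mono (\<lambda>n. k*n + 1)" using k0 by (intro strict_monoI) simp
    show "X3 m = 0" if "m \<notin> range (\<lambda>n. k*n + 1)" for m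
    proof (rule ccontr)
      assume a: "X3 m \<noteq> 0"
      have "m \<noteq> 0"
      proof
        assume "m = 0" thus False using a by (simp add: X3_def)
      qed
      moreover from a have "k dvd (m-1)" by (simp add: X3_def split: if_splits)
      then obtain q where "m - 1 = k * q" by (elim dvdE)
      ultimately have "m = k*q + 1" by simp
      with that show False by auto
    qed
  qed (rule s3)
  hence "(\<lambda>n. bb r (k*n + 1)) sums (suminf X3)" by (simp add: X3_def)
  hence r3: "(\<lambda>n. bb r (k * Suc n + 1)) sums (suminf X3 - 2 * r)"
    using sums_Suc_iff[of "\<lambda>n. bb r (k*n + 1)" "suminf X3 - 2 * r"] by (simp add: bb1)
  have "(\<lambda>n. bb r (k * Suc n - 1) / 2 + bb r (k * Suc n) + bb r (k * Suc n + 1) / 2) sums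
        (suminf X2 / 2 + suminf X1 + (suminf X3 - 2 * r) / 2)"
    by (intro sums_add sums_divide r1 r2 r3)
  moreover have "suminf X2 / 2 + suminf X1 + (suminf X3 - 2 * r) / 2 = S - r"
    unfolding Seq by simp
  ultimately show ?thesis by (simp add: gg_def)
qed

lemma key_identity:
  fixes s k :: nat
  assumes k: "k > 1" and cop: "coprime s k"
  shows "(\<Sum>i<k. (1 + cos (real i * (2*pi*real s/real k))) * ln (2 * (1 + cos (real i * (2*pi*real s/real k)))))
         = real k * (1 + (\<Sum>n. gg k (Suc n) 1))"
proof -
  define \<beta> where "\<beta> = 2*pi*real s/real k"
  define w where "w i = 1 + cos (real i * \<beta>)" for i
  define G where "G r = (\<Sum>i<k. w i * ln (1 + 2*r*cos (real i * \<beta>) + r^2))" for r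
  define Ff where "Ff r = (\<Sum>n. gg k (Suc n) r)" for r
  have k0: "k > 0" using k by simp
  have M: "summable (\<lambda>n. 3 * inverse (real (Suc n) ^ 2))"
  proof -
    have "summable (\<lambda>n. inverse (real n ^ 2))" using inverse_power_summable[of 2] by simp
    hence "summable (\<lambda>n. inverse (real (Suc n) ^ 2))" by (subst summable_Suc_iff)
    thus ?thesis by (rule summable_mult)
  qed
  have bnd: "norm (gg k (Suc n) r) \<le> 3 * inverse (real (Suc n) ^ 2)" if "r \<in> {0..1}" for n r
    using gg_bound[OF k, of "Suc n" r] that by (simp add: divide_inverse)
  have ul: "uniform_limit {0..1} (\<lambda>n r. \<Sum>i<n. gg k (Suc i) r) (\<lambda>r. \<Sum>i. gg k (Suc i) r) sequentially"
    by (rule Weierstrass_m_test[OF bnd M])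
  have contp: "continuous_on {0..1} (\<lambda>r. \<Sum>i<n. gg k (Suc i) r)" for n
    unfolding gg_def bb_def by (intro continuous_intros) auto
  have cont: "continuous_on {0..1} Ff"
    unfolding Ff_def by (rule uniform_limit_theorem[OF _ ul]) (auto intro: contp always_eventually)
  have limF: "(Ff \<longlongrightarrow> Ff 1) (at_left 1)"
  proof -
    have "(Ff \<longlongrightarrow> Ff 1) (at 1 within {0..1})" using cont unfolding continuous_on_def by simp
    moreover have "at (1::real) within {0..1} = at_left 1" by (rule at_within_Icc_at_left) simp
    ultimately show ?thesis by simp
  qed
  have Geq: "G r = real k * (r + Ff r)" if r: "0 \<le> r" "r < 1" for r
  proof -
    have "(\<lambda>m. real k * (bb r m * cf k m)) sums G r"
      using G_series[OF k0 cop r] unfolding G_def w_def \<beta>_def .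
    hence "(\<lambda>m. real k * (bb r m * cf k m) / real k) sums (G r / real k)" by (rule sums_divide)
    hence "(\<lambda>m. bb r m * cf k m) sums (G r / real k)" using k0 by simp
    hence "(\<lambda>n. gg k (Suc n) r) sums (G r / real k - r)" by (rule split3[OF k r])
    hence "Ff r = G r / real k - r" unfolding Ff_def by (simp add: sums_iff)
    thus ?thesis using k0 by (simp add: field_simps)
  qed
  have limG: "(G \<longlongrightarrow> (\<Sum>i<k. w i * ln (2 * w i))) (at_left 1)"
    unfolding G_def
  proof (intro tendsto_sum)
    fix i
    show "((\<lambda>r. w i * ln (1 + 2*r*cos (real i * \<beta>) + r^2)) \<longlongrightarrow> w i * ln (2 * w i)) (at_left 1)"
    proof (cases "w i = 0")
      case True then show ?thesis by simp
    next
      case False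
      have "((\<lambda>r. w i * ln (1 + 2*r*cos (real i * \<beta>) + r^2)) \<longlongrightarrow> w i * ln (1 + 2*1*cos (real i * \<beta>) + 1^2)) (at_left 1)"
        using False by (intro tendsto_intros) (auto simp: w_def)
      thus ?thesis by (simp add: w_def algebra_simps)
    qed
  qed
  have limG2: "(G \<longlongrightarrow> real k * (1 + Ff 1)) (at_left 1)"
  proof (rule Lim_transform_eventually)
    show "((\<lambda>r. real k * (r + Ff r)) \<longlongrightarrow> real k * (1 + Ff 1)) (at_left 1)"
      by (intro tendsto_intros limF)
    show "\<forall>\<^sub>F r in at_left 1. real k * (r + Ff r) = G r"
      using eventually_at_left_real[of 0 "1::real", OF zero_less_one]
    proof (rule eventually_mono)
      fix r :: real assume "r \<in> {0<..<1}"
      hence "0 \<le> r" "r < 1" by auto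
      thus "real k * (r + Ff r) = G r" using Geq by simp
    qed
  qed
  have "(\<Sum>i<k. w i * ln (2 * w i)) = real k * (1 + Ff 1)"
    using tendsto_unique[OF trivial_limit_at_left_real limG limG2] .
  thus ?thesis unfolding w_def \<beta>_def Ff_def .
qed


theorem proposition1:
  fixes s k :: nat and \<theta> x :: real
  assumes "0 < s" and "s < k" and "gcd s k = 1"
    and "\<theta> = pi * real s / real k" and "x = cos \<theta>"
  shows "(even k \<longrightarrow>
            ((\<lambda>n. ln (real n) - entropy_Psi n x) \<longlonglongrightarrow> 1 - ln 2 + R_fun (1 / real k))
            \<and> 1 - ln 2 + R_fun (1 / real k) > 1 - ln 2)
       \<and> (odd k \<longrightarrow>
            ((\<lambda>n. ln (real n) - entropy_Psi n x) \<longlonglongrightarrow>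
               1 - ln 2 + 2 * (R_fun (1 / (2 * real k)) - R_fun (1 / real k) / 2))
            \<and> 1 - ln 2 + 2 * (R_fun (1 / (2 * real k)) - R_fun (1 / real k) / 2) < 1 - ln 2)"
proof -
  note s = assms(1,2)
  have cop: "coprime s k" using assms(3) by (simp add: coprime_iff_gcd_eq_1)
  have k: "k > 1" "k > 0" "k \<ge> 2" using s by auto
  define w where "w i = 1 + cos (real i * (2*pi*real s/real k))" for i
  define Ff where "Ff = (\<Sum>n. gg k (Suc n) 1)"
  have t2: "2*\<theta> = 2*pi*real s/real k" using assms(4) by simp
  have lim: "(\<lambda>n. ln (real n) - entropy_Psi n x) \<longlonglongrightarrow> (\<Sum>i<k. w i * ln (w i)) / real k"
    using main_limit[OF s cop assms(4)] unfolding assms(5)[symmetric] t2 w_def .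
  have key: "(\<Sum>i<k. w i * ln (2 * w i)) = real k * (1 + Ff)"
    using key_identity[OF k(1) cop] unfolding w_def Ff_def .
  have nd: "\<not> k dvd 1" using k by auto
  have "(\<Sum>i<k. cos (real 1 * (real i * (2*pi*real s/real k)))) = (if k dvd 1 then real k else 0)"
    by (rule cos_sum_roots[OF k(2) cop])
  hence sumcos: "(\<Sum>i<k. cos (real i * (2*pi*real s/real k))) = 0"
    by (simp only: of_nat_1 mult_1_left nd if_False)
  have sumw: "(\<Sum>i<k. w i) = real k" unfolding w_def sum.distrib sumcos by simp
  have wnn: "w i \<ge> 0" for i unfolding w_def using cos_ge_minus_one[of "real i * (2*pi*real s/real k)"] by linarith
  have tw: "w i * ln (2 * w i) = w i * ln (w i) + ln 2 * w i" for i
  proof (cases "w i = 0")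
    case False
    hence "w i > 0" using wnn[of i] by simp
    thus ?thesis by (simp add: ln_mult algebra_simps)
  qed simp
  have "(\<Sum>i<k. w i * ln (w i)) = real k * (1 + Ff) - ln 2 * real k"
    using key unfolding tw sum.distrib by (simp add: sum_distrib_left[symmetric] sumw)
  hence C: "(\<Sum>i<k. w i * ln (w i)) / real k = 1 - ln 2 + Ff"
    using k by (simp add: field_simps)
  have ggs: "gg k (Suc n) 1 = (-1)^(k * Suc n) * tt (real (k * Suc n))" for n
  proof (rule gg_one)
    have "k * 1 \<le> k * Suc n" by (intro mult_le_mono2) simp
    thus "k * Suc n \<ge> 2" using k(3) by simp
  qed
  show ?thesis
  proof (intro conjI impI)
    assume ev: "even k"
    have "(-1::real)^(k * Suc n) = 1" for n using ev by simp
    hence "(\<lambda>n. gg k (Suc n) 1) = (\<lambda>n. tt (real (k * Suc n)))" by (simp add: ggs)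
    hence "Ff = R_fun (1 / real k)" unfolding Ff_def using R_inv[OF k(3)] by (simp add: sums_iff)
    thus "(\<lambda>n. ln (real n) - entropy_Psi n x) \<longlonglongrightarrow> 1 - ln 2 + R_fun (1 / real k)"
      using lim C by simp
    show "1 - ln 2 + R_fun (1 / real k) > 1 - ln 2" using R_pos[OF k(3)] by simp
  next
    assume od: "odd k"
    have "(-1::real)^(k * Suc n) = (-1)^Suc n" for n
    proof -
      have "(-1::real)^(k * Suc n) = ((-1)^k)^(Suc n)" by (simp only: power_mult)
      also have "(-1::real)^k = -1" using od by simp
      finally show ?thesis .
    qed
    hence e: "(\<lambda>n. gg k (Suc n) 1) = (\<lambda>n. (-1)^Suc n * tt (real (k * Suc n)))" by (simp add: ggs)
    have "(\<lambda>n. (-1)^Suc n * tt (real (k * Suc n))) sums (2 * R_fun (1 / (2 * real k)) - R_fun (1 / real k))"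
      using R_alt[OF k(3)] sums_Suc_iff[of "\<lambda>n. (-1)^n * tt (real (k * n))"] by simp
    hence "Ff = 2 * R_fun (1 / (2 * real k)) - R_fun (1 / real k)" unfolding Ff_def e by (simp add: sums_iff)
    hence v: "1 - ln 2 + Ff = 1 - ln 2 + 2 * (R_fun (1 / (2 * real k)) - R_fun (1 / real k) / 2)"
      by (simp add: algebra_simps)
    have "(\<lambda>n. ln (real n) - entropy_Psi n x) \<longlonglongrightarrow> 1 - ln 2 + Ff" using lim unfolding C .
    thus "(\<lambda>n. ln (real n) - entropy_Psi n x) \<longlonglongrightarrow>
               1 - ln 2 + 2 * (R_fun (1 / (2 * real k)) - R_fun (1 / real k) / 2)"
      unfolding v .
    show "1 - ln 2 + 2 * (R_fun (1 / (2 * real k)) - R_fun (1 / real k) / 2) < 1 - ln 2"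
      using R_odd_neg[OF k(3)] by simp
  qed
qed

end
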